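(* For the system $$u_{0,0}-v_{1,1}=0,\qquad (u_{1,0}-u_{0,0})(v_{1,0}-u_{0,0})-(u_{0,1}-u_{0,0})(v_{0,1}-u_{0,0})=0,$$ the following pairs are conservation laws, i.e. satisfy $(\mathcal T-1)\rho=(\mathcal S-1)\sigma$ on solutions: $$(\rho_1,\sigma_1)=\Big(\ln\Big|\frac{v_{0,0}-u_{-1,0}}{(v_{1,0}-u_{-1,0})^2}\Big|,\ \ \ln\Big|\frac{(u_{-2,0}-v_{0,0})^2}{u_{-2,0}-u_{-1,0}}\Big|\Big),$$ $$(\varrho,\varsigma)=\big(\ln|v_{1,0}-u_{0,0}|,\ \ \ln|v_{0,1}-u_{0,0}|\big).$$
   Context: Unknowns $u,v$ on $\mathbb Z^2$, $u_{i,j}=u(n+i,m+j)$, similarly $v$. Shifts $\mathcal S:n\mapsto n+1$, $\mathcal T:m\mapsto m+1$, acting by $\mathcal S^k\mathcal T^\ell(f_{i,j})=f_{i+k,j+\ell}$. A conservation law is a pair $(\rho,\sigma)$ of functions of finitely many shifts of $(u,v)$ such that $(\mathcal T-1)\rho=(\mathcal S-1)\sigma$ holds for all solutions of the system (on which all arguments of logarithms and denominators are nonzero). *)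

theory Defs
  imports Complex_Main
begin

text \<open>Lattice fields u, v : Z^2 -> R; u i j stands for u(n+i, m+j) at base point (n,m).
  Shifts: S (n \<mapsto> n+1), T (m \<mapsto> m+1).\<close>

type_synonym field2 = "int \<Rightarrow> int \<Rightarrow> real"

definition is_solution :: "field2 \<Rightarrow> field2 \<Rightarrow> bool" where
  "is_solution u v \<longleftrightarrow> (\<forall>n m.
      u n m - v (n+1) (m+1) = 0 \<and>
      (u (n+1) m - u n m) * (v (n+1) m - u n m)
        - (u n (m+1) - u n m) * (v n (m+1) - u n m) = 0)"

definition is_conservation_law :: "field2 \<Rightarrow> field2 \<Rightarrow> bool" where
  "is_conservation_law rho sigma \<longleftrightarrow>
     (\<forall>n m. rho n (m+1) - rho n m = sigma (n+1) m - sigma n m)"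

definition rho1 :: "field2 \<Rightarrow> field2 \<Rightarrow> field2" where
  "rho1 u v n m = ln \<bar>(v n m - u (n-1) m) / (v (n+1) m - u (n-1) m)^2\<bar>"

definition sigma1 :: "field2 \<Rightarrow> field2 \<Rightarrow> field2" where
  "sigma1 u v n m = ln \<bar>(u (n-2) m - v n m)^2 / (u (n-2) m - u (n-1) m)\<bar>"

definition rho2 :: "field2 \<Rightarrow> field2 \<Rightarrow> field2" where
  "rho2 u v n m = ln \<bar>v (n+1) m - u n m\<bar>"

definition sigma2 :: "field2 \<Rightarrow> field2 \<Rightarrow> field2" where
  "sigma2 u v n m = ln \<bar>v n (m+1) - u n m\<bar>"

definition nondegenerate :: "field2 \<Rightarrow> field2 \<Rightarrow> bool" where
  "nondegenerate u v \<longleftrightarrow> (\<forall>n m.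
      v n m - u (n-1) m \<noteq> 0 \<and> v (n+1) m - u (n-1) m \<noteq> 0 \<and>
      u (n-2) m - v n m \<noteq> 0 \<and> u (n-2) m - u (n-1) m \<noteq> 0 \<and>
      v (n+1) m - u n m \<noteq> 0 \<and> v n (m+1) - u n m \<noteq> 0)"

end

theory Submission
  imports Defs
begin

lemma lnm: "(x::real) \<noteq> 0 \<Longrightarrow> y \<noteq> 0 \<Longrightarrow> ln \<bar>x*y\<bar> = ln \<bar>x\<bar> + ln \<bar>y\<bar>"
  by (simp add: abs_mult ln_mult)
lemma lnd: "(x::real) \<noteq> 0 \<Longrightarrow> y \<noteq> 0 \<Longrightarrow> ln \<bar>x/y\<bar> = ln \<bar>x\<bar> - ln \<bar>y\<bar>"
  by (simp add: ln_div)
lemma lns: "(x::real) \<noteq> 0 \<Longrightarrow> ln \<bar>x^2\<bar> = 2 * ln \<bar>x\<bar>"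
  using lnm[of x x] by (simp add: power2_eq_square abs_mult)

lemma lnq1: "(x::real) \<noteq> 0 \<Longrightarrow> y \<noteq> 0 \<Longrightarrow> ln \<bar>x/y^2\<bar> = ln \<bar>x\<bar> - 2 * ln \<bar>y\<bar>"
  using lnd[of x "y^2"] lns[of y] by simp
lemma lnq2: "(x::real) \<noteq> 0 \<Longrightarrow> y \<noteq> 0 \<Longrightarrow> ln \<bar>x^2/y\<bar> = 2 * ln \<bar>x\<bar> - ln \<bar>y\<bar>"
  using lnd[of "x^2" y] lns[of x] by simp

theorem mainTheorem12:
  fixes u v :: "int \<Rightarrow> int \<Rightarrow> real"
  assumes "is_solution u v" and "nondegenerate u v"
  shows "is_conservation_law (rho1 u v) (sigma1 u v) \<and>
         is_conservation_law (rho2 u v) (sigma2 u v)"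
proof -
  have V: "\<And>n m. v n m = u (n-1) (m-1)"
  proof -
    fix n m :: int
    have "u (n-1) (m-1) - v (n-1+1) (m-1+1) = 0" using assms(1) unfolding is_solution_def by blast
    thus "v n m = u (n-1) (m-1)" by simp
  qed
  have E: "\<And>n m. (u (n+1) m - u n m) * (u n (m-1) - u n m)
        = (u n (m+1) - u n m) * (u (n-1) m - u n m)"
  proof -
    fix n m :: int
    have "(u (n+1) m - u n m) * (v (n+1) m - u n m)
        - (u n (m+1) - u n m) * (v n (m+1) - u n m) = 0"
      using assms(1) unfolding is_solution_def by blast
    thus "?thesis n m" by (simp add: V)
  qed
  have ND: "\<And>n m. u (n-1) (m-1) - u (n-1) m \<noteq> 0 \<and> u n (m-1) - u (n-1) m \<noteq> 0 \<and>
      u (n-2) m - u (n-1) (m-1) \<noteq> 0 \<and> u (n-2) m - u (n-1) m \<noteq> 0 \<and>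
      u n (m-1) - u n m \<noteq> 0 \<and> u (n-1) m - u n m \<noteq> 0"
  proof -
    fix n m :: int
    have "\<forall>n m. v n m - u (n-1) m \<noteq> 0 \<and> v (n+1) m - u (n-1) m \<noteq> 0 \<and>
      u (n-2) m - v n m \<noteq> 0 \<and> u (n-2) m - u (n-1) m \<noteq> 0 \<and>
      v (n+1) m - u n m \<noteq> 0 \<and> v n (m+1) - u n m \<noteq> 0"
      using assms(2) unfolding nondegenerate_def by blast
    thus "?thesis n m" by (simp add: V)
  qed
  have L1: "is_conservation_law (rho1 u v) (sigma1 u v)"
    unfolding is_conservation_law_def
  proof (intro allI)
    fix n m :: int
    define P1 where "P1 = u (n-1) m - u (n-1) (m+1)"
    define P2 where "P2 = u n m - u (n-1) (m+1)"
    define P3 where "P3 = u (n-1) (m-1) - u (n-1) m"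
    define P4 where "P4 = u (n-1) m - u n m"
    define P5 where "P5 = u (n-2) m - u (n-1) (m-1)"
    define P6 where "P6 = u (n-2) m - u (n-1) m"
    define Q where "Q = u n (m-1) - u (n-1) m"
    have e: "(u (n-1+1) m - u (n-1) m) * (u (n-1) (m-1) - u (n-1) m)
        = (u (n-1) (m+1) - u (n-1) m) * (u (n-1-1) m - u (n-1) m)" by (rule E)
    have n3: "P3 \<noteq> 0" using ND[of n m] by (simp add: P3_def)
    have nQ: "Q \<noteq> 0" using ND[of n m] by (simp add: Q_def)
    have n5: "P5 \<noteq> 0" using ND[of n m] by (simp add: P5_def)
    have n6: "P6 \<noteq> 0" using ND[of n m] by (simp add: P6_def)
    have n4: "P4 \<noteq> 0" using ND[of "n+1" m] by (simp add: P4_def)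
    have n2: "P2 \<noteq> 0" using ND[of n m] ND[of n "m+1"] by (simp add: P2_def)
    have n1: "P1 \<noteq> 0" using ND[of "n-1" "m+1"] by (simp add: P1_def)
    have e': "P4 * P3 = P1 * P6" using e by (simp add: P1_def P3_def P4_def P6_def algebra_simps)
    have h1: "P1 = P4 * P3 / P6" using e' n6 by (simp add: field_simps)
    have h2: "P2 = - (P4 * P5 / P6)" using e' n6 n4 unfolding P1_def P2_def P5_def P6_def P3_def P4_def
      by (simp add: field_simps)
    have l1: "ln \<bar>P1\<bar> = ln \<bar>P4\<bar> + ln \<bar>P3\<bar> - ln \<bar>P6\<bar>"
      unfolding h1 using n3 n4 n6 lnd[of "P4*P3" P6] lnm[of P4 P3] by simp
    have l2: "ln \<bar>P2\<bar> = ln \<bar>P4\<bar> + ln \<bar>P5\<bar> - ln \<bar>P6\<bar>"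
      unfolding h2 abs_minus_cancel using n5 n4 n6 lnd[of "P4*P5" P6] lnm[of P4 P5] by simp
    have r1: "rho1 u v n (m+1) = ln \<bar>P1\<bar> - 2 * ln \<bar>P2\<bar>"
    proof -
      have "rho1 u v n (m+1) = ln \<bar>P1/P2^2\<bar>" by (simp add: rho1_def V P1_def P2_def)
      thus ?thesis using lnq1[OF n1 n2] by simp
    qed
    have r0: "rho1 u v n m = ln \<bar>P3\<bar> - 2 * ln \<bar>Q\<bar>"
    proof -
      have "rho1 u v n m = ln \<bar>P3/Q^2\<bar>" by (simp add: rho1_def V P3_def Q_def)
      thus ?thesis using lnq1[of "P3" "Q"] n3 nQ by simp
    qed
    have s1: "sigma1 u v (n+1) m = 2 * ln \<bar>Q\<bar> - ln \<bar>P4\<bar>"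
    proof -
      have "sigma1 u v (n+1) m = ln \<bar>Q^2/P4\<bar>" by (simp add: sigma1_def V P4_def Q_def power2_commute)
      thus ?thesis using lnq2[of "Q" P4] n4 nQ by simp
    qed
    have s0: "sigma1 u v n m = 2 * ln \<bar>P5\<bar> - ln \<bar>P6\<bar>"
    proof -
      have "sigma1 u v n m = ln \<bar>P5^2/P6\<bar>" by (simp add: sigma1_def V P5_def P6_def)
      thus ?thesis using lnq2[OF n5 n6] by simp
    qed
    show "rho1 u v n (m+1) - rho1 u v n m = sigma1 u v (n+1) m - sigma1 u v n m"
      using r1 r0 s1 s0 l1 l2 by simp
  qed
  have L2: "is_conservation_law (rho2 u v) (sigma2 u v)"
    unfolding is_conservation_law_def
  proof (intro allI)
    fix n m :: int
    define A where "A = u n m - u n (m+1)"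
    define B where "B = u n (m-1) - u n m"
    define C where "C = u n m - u (n+1) m"
    define D where "D = u (n-1) m - u n m"
    have e: "C * B = A * D" using E[of n m] by (simp add: A_def B_def C_def D_def algebra_simps)
    have nA: "A \<noteq> 0" using ND[of n "m+1"] by (simp add: A_def)
    have nB: "B \<noteq> 0" using ND[of n m] by (simp add: B_def)
    have nC: "C \<noteq> 0" using ND[of "n+1" m] by (simp add: C_def)
    have nD: "D \<noteq> 0" using ND[of n m] by (simp add: D_def)
    have "ln \<bar>C\<bar> + ln \<bar>B\<bar> = ln \<bar>A\<bar> + ln \<bar>D\<bar>"
      using e nA nB nC nD by (metis lnm)
    moreover have "rho2 u v n (m+1) - rho2 u v n m = ln \<bar>A\<bar> - ln \<bar>B\<bar>"
      unfolding rho2_def V by (simp add: A_def B_def)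
    moreover have "sigma2 u v (n+1) m - sigma2 u v n m = ln \<bar>C\<bar> - ln \<bar>D\<bar>"
      unfolding sigma2_def V by (simp add: C_def D_def)
    ultimately show "rho2 u v n (m+1) - rho2 u v n m = sigma2 u v (n+1) m - sigma2 u v n m"
      by simp
  qed
  show ?thesis using L1 L2 by blast
qed

end
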